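(* Let $R$ be a regular run and $t>0$. The guard of SignalOpen [Dir = close and SafeToOpen] holds at $t$ (equivalently, SignalOpen fires at $t$) if and only if SafeToOpen becomes true at $t$. Consequently, SignalOpen fires at a moment $t>0$ only if TrackStatus$(x)$ becomes empty at $t$ for some track $x$.
   Context: Setting (evolving algebra for the railroad crossing). States are structures over a vocabulary containing: a finite universe Tracks; the reals and ExtendedReals $=\mathbb{R}\cup\{\infty\}$ with standard $<$ and $+$ ($\infty$ largest); a nullary real-valued symbol $\mathrm{CT}$ (current time); positive real constants $d_{close},d_{open},d_{min},d_{max}$ with $d_{close}<d_{min}\le d_{max}$; a unary function TrackStatus from Tracks to $\{\text{empty},\text{coming},\text{incrossing}\}$; a unary function Deadline from Tracks to ExtendedReals; a nullary Dir with values in $\{\text{open},\text{close}\}$; a nullary GateStatus with values in $\{\text{opened},\text{closed}\}$. Put $W=d_{min}-d_{close}$ and $\Delta_{close}=d_{close}+(d_{max}-d_{min})=d_{max}-W$. For a track $x$, $s(x)$ is the condition [$\mathrm{TrackStatus}(x)=\text{empty}$ or $\mathrm{CT}+d_{open}<\mathrm{Deadline}(x)$], and SafeToOpen is $\forall x\in\mathrm{Tracks}\ s(x)$. The program has two modules (agents). Gate: simultaneously OpenGate "if Dir=open then GateStatus:=opened" and CloseGate "if Dir=close then GateStatus:=closed". Controller: simultaneously, for every track $x$, SetDeadline$(x)$ "if TrackStatus$(x)$=coming and Deadline$(x)=\infty$ then Deadline$(x):=\mathrm{CT}+W$", SignalClose$(x)$ "if $\mathrm{CT}=$Deadline$(x)$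 then Dir:=close", ClearDeadline$(x)$ "if TrackStatus$(x)$=empty and Deadline$(x)<\infty$ then Deadline$(x):=\infty$", together with SignalOpen "if Dir=close and SafeToOpen then Dir:=open". Executing a module means computing all updates it generates in the current state and performing them simultaneously (nothing happens if the update set is inconsistent). A module is enabled at a state if its update set is consistent and contains an update that changes the state. TrackStatus is external (changed only by the environment); Deadline, Dir, GateStatus are internal (changed only by the modules); other symbols are static. Runs: for $t\mapsto R(t)$, $t\in[0,\infty)$, let $\rho(t)$ be the reduct of $R(t)$ without CT. $R$ is a pre-run if all $R(t)$ share a superuniverse, $\mathrm{CT}=t$ in $R(t)$, and for every $\tau>0$ there are $0=t_0<\dots<t_n=\tau$ with $\rho$ constant on each $(t_i,t_{i+1})$. For a term $e$ (free variables fixed), $e_t$ is its value in $R(t)$, $e_{t+}$ (resp. $e_{t-}$, $t>0$) its constant value on some $(t,t+\epsilon)$ (resp. $(t-\epsilon,t)$); likewise $\rho(t\pm)$. $e$ holds over an interval if it holds at each point; $e$ becomes (is set to) $a$ at $t$ if $e_{t-}\ne a=e_t$ or $e_t\neq a=e_{t+}$. A pre-run is a run if (i) whenever $\rho(t+)\neq\rho(t)$, $\rho(t+)$ is the CT-free reduct of the result of executing some modules at $R(t)$ (these agents fire at $t$), with external functions equal in $\rho(t)$ and $\rho(t+)$; (ii) whenever $t>0$ and $\rho(t)\ne\rho(t-)$, they differ only in external functions. An agent is immediate if it fires at every moment it is enabled; bounded if immediate or there is $b>0$ with no interval $(t,t+b)$ over which it is enabled but never fires. Initial states: TrackStatus$(x)$=empty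 and Deadline$(x)=\infty$ for every track $x$. A regular run is a run $R$ with $R(0)$ initial such that: (Train Motion) for each track $x$ there is a finite or infinite sequence $0=t_0<t_1<t_2<\cdots$ (the significant moments of $x$) with TrackStatus$(x)$=empty over each $[t_{3i},t_{3i+1})$, =coming over each $[t_{3i+1},t_{3i+2})$ where $d_{min}\le t_{3i+2}-t_{3i+1}\le d_{max}$, =incrossing over each $[t_{3i+2},t_{3i+3})$, and, if the sequence is finite with last element $t_k$, then $3\mid k$ and TrackStatus$(x)$=empty over $[t_k,\infty)$; (Controller Timing) Controller is immediate; (Gate Timing) Gate is bounded, there is no interval $(t,t+d_{close})$ over which Dir=close and GateStatus=opened both hold, and no interval $(t,t+d_{open})$ over which Dir=open and GateStatus=closed both hold. *)

theory Defs
  imports Complex_Main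
begin

datatype tstat = Empty | Coming | InCrossing
datatype dirv = Open | Close
datatype gstat = Opened | Closed

datatype ext = Fin real | Infty

fun ext_less :: "ext \<Rightarrow> ext \<Rightarrow> bool" where
  "ext_less (Fin a) (Fin b) = (a < b)"
| "ext_less (Fin a) Infty = True"
| "ext_less Infty _ = False"

text \<open>CT-free part of a state (the dynamic functions; the static part is given
  by parameters).  Only the values at tracks (elements of the track set) matter.\<close>
record 'tr st =
  TrackStatus :: "'tr \<Rightarrow> tstat"
  Deadline :: "'tr \<Rightarrow> ext"
  Dir :: dirv
  GateStatus :: gstat

definition rst :: "'tr set \<Rightarrow> 'tr st \<Rightarrow> 'tr st" where
  "rst T s = s\<lparr>TrackStatus := (\<lambda>x. if x \<in> T then TrackStatus s x else Empty),
               Deadline := (\<lambda>x. if x \<in> T then Deadline s x else Infty)\<rparr>"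

datatype 'tr upd = UDL 'tr ext | UDir dirv | UGS gstat

definition consistent :: "'tr upd set \<Rightarrow> bool" where
  "consistent U \<longleftrightarrow>
     (\<forall>x a b. UDL x a \<in> U \<longrightarrow> UDL x b \<in> U \<longrightarrow> a = b) \<and>
     (\<forall>a b. UDir a \<in> U \<longrightarrow> UDir b \<in> U \<longrightarrow> a = b) \<and>
     (\<forall>a b. UGS a \<in> U \<longrightarrow> UGS b \<in> U \<longrightarrow> a = b)"

definition apply_upd :: "'tr upd set \<Rightarrow> 'tr st \<Rightarrow> 'tr st" where
  "apply_upd U s = s\<lparr>
     Deadline := (\<lambda>x. if \<exists>a. UDL x a \<in> U then (THE a. UDL x a \<in> U) else Deadline s x),
     Dir := (if \<exists>a. UDir a \<in> U then (THE a. UDir a \<in> U) else Dir s),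
     GateStatus := (if \<exists>a. UGS a \<in> U then (THE a. UGS a \<in> U) else GateStatus s)\<rparr>"

definition changes :: "'tr upd set \<Rightarrow> 'tr st \<Rightarrow> bool" where
  "changes U s \<longleftrightarrow>
     (\<exists>x a. UDL x a \<in> U \<and> Deadline s x \<noteq> a) \<or>
     (\<exists>a. UDir a \<in> U \<and> Dir s \<noteq> a) \<or>
     (\<exists>a. UGS a \<in> U \<and> GateStatus s \<noteq> a)"

text \<open>s(x) and SafeToOpen, evaluated in the state s with current time c.\<close>
definition safe_track :: "real \<Rightarrow> 'tr st \<Rightarrow> real \<Rightarrow> 'tr \<Rightarrow> bool" where
  "safe_track dopen s c x \<longleftrightarrow> TrackStatus s x = Empty \<or> ext_less (Fin (c + dopen)) (Deadline s x)"

definition SafeToOpen :: "'tr set \<Rightarrow> real \<Rightarrow> 'tr st \<Rightarrow> real \<Rightarrow> bool" where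
  "SafeToOpen T dopen s c \<longleftrightarrow> (\<forall>x\<in>T. safe_track dopen s c x)"

definition SignalOpen_guard :: "'tr set \<Rightarrow> real \<Rightarrow> 'tr st \<Rightarrow> real \<Rightarrow> bool" where
  "SignalOpen_guard T dopen s c \<longleftrightarrow> Dir s = Close \<and> SafeToOpen T dopen s c"

datatype agent = Gate | Controller

text \<open>Update set generated by a module in state s with CT = c
  (parameters: Tracks T, d_open, W = d_min - d_close).\<close>
definition upds :: "'tr set \<Rightarrow> real \<Rightarrow> real \<Rightarrow> agent \<Rightarrow> 'tr st \<Rightarrow> real \<Rightarrow> 'tr upd set" where
  "upds T dopen W A s c = (case A of
     Gate \<Rightarrow> (if Dir s = Open then {UGS Opened} else {}) \<union> (if Dir s = Close then {UGS Closed} else {})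
   | Controller \<Rightarrow>
       {UDL x (Fin (c + W)) | x. x \<in> T \<and> TrackStatus s x = Coming \<and> Deadline s x = Infty}
     \<union> {UDir Close | x. x \<in> T \<and> Deadline s x = Fin c}
     \<union> {UDL x Infty | x. x \<in> T \<and> TrackStatus s x = Empty \<and> Deadline s x \<noteq> Infty}
     \<union> (if SignalOpen_guard T dopen s c then {UDir Open} else {}))"

definition enabled :: "'tr set \<Rightarrow> real \<Rightarrow> real \<Rightarrow> agent \<Rightarrow> 'tr st \<Rightarrow> real \<Rightarrow> bool" where
  "enabled T dopen W A s c \<longleftrightarrow>
     consistent (upds T dopen W A s c) \<and> changes (upds T dopen W A s c) s"

definition exec :: "'tr set \<Rightarrow> real \<Rightarrow> real \<Rightarrow> agent set \<Rightarrow> 'tr st \<Rightarrow> real \<Rightarrow> 'tr st" where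
  "exec T dopen W M s c =
     apply_upd (\<Union>A\<in>{A\<in>M. consistent (upds T dopen W A s c)}. upds T dopen W A s c) s"

definition right_val :: "(real \<Rightarrow> 'a) \<Rightarrow> real \<Rightarrow> 'a \<Rightarrow> bool" where
  "right_val e t v \<longleftrightarrow> (\<exists>\<epsilon>>0. \<forall>u. t < u \<and> u < t + \<epsilon> \<longrightarrow> e u = v)"

definition left_val :: "(real \<Rightarrow> 'a) \<Rightarrow> real \<Rightarrow> 'a \<Rightarrow> bool" where
  "left_val e t v \<longleftrightarrow> (\<exists>\<epsilon>>0. \<forall>u. t - \<epsilon> < u \<and> u < t \<longrightarrow> e u = v)"

definition becomes :: "(real \<Rightarrow> 'a) \<Rightarrow> 'a \<Rightarrow> real \<Rightarrow> bool" where
  "becomes e a t \<longleftrightarrow>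
     ((\<exists>v. left_val e t v \<and> v \<noteq> a) \<and> e t = a) \<or> (e t \<noteq> a \<and> right_val e t a)"

text \<open>A run is given by R : time \<Rightarrow> CT-free state; R(t) has CT = t.
  rho R t is the CT-free reduct over the universe Tracks.\<close>
definition rho :: "'tr set \<Rightarrow> (real \<Rightarrow> 'tr st) \<Rightarrow> real \<Rightarrow> 'tr st" where
  "rho T R t = rst T (R t)"

definition pre_run :: "'tr set \<Rightarrow> (real \<Rightarrow> 'tr st) \<Rightarrow> bool" where
  "pre_run T R \<longleftrightarrow>
     (\<forall>\<tau>>0. \<exists>S. finite S \<and>
        (\<forall>u v. u < v \<and> {u..v} \<subseteq> {0..\<tau>} - S \<longrightarrow> rho T R u = rho T R v))"

definition fires :: "'tr set \<Rightarrow> real \<Rightarrow> real \<Rightarrow> (real \<Rightarrow> 'tr st) \<Rightarrow> agent \<Rightarrow> real \<Rightarrow> bool" where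
  "fires T dopen W R A t \<longleftrightarrow>
     (\<exists>v. right_val (rho T R) t v \<and> v \<noteq> rho T R t \<and>
          (\<exists>M. A \<in> M \<and> v = rst T (exec T dopen W M (R t) t)))"

definition is_run :: "'tr set \<Rightarrow> real \<Rightarrow> real \<Rightarrow> (real \<Rightarrow> 'tr st) \<Rightarrow> bool" where
  "is_run T dopen W R \<longleftrightarrow> pre_run T R \<and>
     (\<forall>t\<ge>0. \<forall>v. right_val (rho T R) t v \<and> v \<noteq> rho T R t \<longrightarrow>
        (\<exists>M. v = rst T (exec T dopen W M (R t) t)) \<and>
        TrackStatus v = TrackStatus (rho T R t)) \<and>
     (\<forall>t>0. \<forall>v. left_val (rho T R) t v \<and> v \<noteq> rho T R t \<longrightarrow>
        Deadline v = Deadline (rho T R t) \<and> Dir v = Dir (rho T R t) \<and>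
        GateStatus v = GateStatus (rho T R t))"

definition immediate :: "'tr set \<Rightarrow> real \<Rightarrow> real \<Rightarrow> (real \<Rightarrow> 'tr st) \<Rightarrow> agent \<Rightarrow> bool" where
  "immediate T dopen W R A \<longleftrightarrow>
     (\<forall>t\<ge>0. enabled T dopen W A (R t) t \<longrightarrow> fires T dopen W R A t)"

definition bounded :: "'tr set \<Rightarrow> real \<Rightarrow> real \<Rightarrow> (real \<Rightarrow> 'tr st) \<Rightarrow> agent \<Rightarrow> bool" where
  "bounded T dopen W R A \<longleftrightarrow> immediate T dopen W R A \<or>
     (\<exists>b>0. \<not> (\<exists>t\<ge>0. (\<forall>u. t < u \<and> u < t + b \<longrightarrow> enabled T dopen W A (R u) u) \<and>
                      (\<forall>u. t < u \<and> u < t + b \<longrightarrow> \<not> fires T dopen W R A u)))"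

definition initial_state :: "'tr set \<Rightarrow> 'tr st \<Rightarrow> bool" where
  "initial_state T s \<longleftrightarrow> (\<forall>x\<in>T. TrackStatus s x = Empty \<and> Deadline s x = Infty)"

definition train_phase :: "real \<Rightarrow> real \<Rightarrow> (real \<Rightarrow> tstat) \<Rightarrow> (nat \<Rightarrow> real) \<Rightarrow> nat \<Rightarrow> bool" where
  "train_phase dmin dmax f ts i \<longleftrightarrow>
     (\<forall>u. ts (3*i) \<le> u \<and> u < ts (3*i+1) \<longrightarrow> f u = Empty) \<and>
     (\<forall>u. ts (3*i+1) \<le> u \<and> u < ts (3*i+2) \<longrightarrow> f u = Coming) \<and>
     dmin \<le> ts (3*i+2) - ts (3*i+1) \<and> ts (3*i+2) - ts (3*i+1) \<le> dmax \<and>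
     (\<forall>u. ts (3*i+2) \<le> u \<and> u < ts (3*i+3) \<longrightarrow> f u = InCrossing)"

definition train_motion :: "real \<Rightarrow> real \<Rightarrow> (real \<Rightarrow> tstat) \<Rightarrow> bool" where
  "train_motion dmin dmax f \<longleftrightarrow> (\<exists>ts. ts 0 = 0 \<and>
     ((\<forall>n. ts n < ts (Suc n)) \<and> (\<forall>i. train_phase dmin dmax f ts i)
      \<or>
      (\<exists>k. 3 dvd k \<and> (\<forall>n<k. ts n < ts (Suc n)) \<and>
           (\<forall>i. 3*i+3 \<le> k \<longrightarrow> train_phase dmin dmax f ts i) \<and>
           (\<forall>u. ts k \<le> u \<longrightarrow> f u = Empty))))"

definition regular_run ::
  "'tr set \<Rightarrow> real \<Rightarrow> real \<Rightarrow> real \<Rightarrow> real \<Rightarrow> (real \<Rightarrow> 'tr st) \<Rightarrow> bool" where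
  "regular_run T dclose dopen dmin dmax R \<longleftrightarrow>
     (let W = dmin - dclose in
      is_run T dopen W R \<and> initial_state T (R 0) \<and>
      (\<forall>x\<in>T. train_motion dmin dmax (\<lambda>u. TrackStatus (R u) x)) \<and>
      immediate T dopen W R Controller \<and>
      bounded T dopen W R Gate \<and>
      \<not> (\<exists>t\<ge>0. \<forall>u. t < u \<and> u < t + dclose \<longrightarrow>
             Dir (R u) = Close \<and> GateStatus (R u) = Opened) \<and>
      \<not> (\<exists>t\<ge>0. \<forall>u. t < u \<and> u < t + dopen \<longrightarrow>
             Dir (R u) = Open \<and> GateStatus (R u) = Closed))"

definition SignalOpen_fires ::
  "'tr set \<Rightarrow> real \<Rightarrow> real \<Rightarrow> (real \<Rightarrow> 'tr st) \<Rightarrow> real \<Rightarrow> bool" where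
  "SignalOpen_fires T dopen W R t \<longleftrightarrow>
     fires T dopen W R Controller t \<and> SignalOpen_guard T dopen (R t) t"

end

theory Submission
  imports Defs
begin

lemma rst_simps[simp]:
  "TrackStatus (rst T s) x = (if x \<in> T then TrackStatus s x else Empty)"
  "Deadline (rst T s) x = (if x \<in> T then Deadline s x else Infty)"
  "Dir (rst T s) = Dir s"
  "GateStatus (rst T s) = GateStatus s"
  by (simp_all add: rst_def)

lemma rho_simps[simp]:
  "Dir (rho T R u) = Dir (R u)"
  "y \<in> T \<Longrightarrow> TrackStatus (rho T R u) y = TrackStatus (R u) y"
  "y \<in> T \<Longrightarrow> Deadline (rho T R u) y = Deadline (R u) y"
  by (simp_all add: rho_def)

lemma rho_eq:
  assumes "rho T R u = rho T R w"
  shows "Dir (R u) = Dir (R w) \<and> (\<forall>y\<in>T. TrackStatus (R u) y = TrackStatus (R w) y \<and> Deadline (R u) y = Deadline (R w) y)"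
proof -
  have "Dir (rho T R u) = Dir (rho T R w)" using assms by simp
  moreover have "\<And>y. TrackStatus (rho T R u) y = TrackStatus (rho T R w) y" using assms by simp
  moreover have "\<And>y. Deadline (rho T R u) y = Deadline (rho T R w) y" using assms by simp
  ultimately show ?thesis by (metis rho_simps)
qed

lemma right_val_unique:
  assumes "right_val e t v" "right_val e t w" shows "v = w"
proof -
  obtain e1 where e1: "e1 > 0" "\<forall>u. t < u \<and> u < t + e1 \<longrightarrow> e u = v" using assms(1) unfolding right_val_def by blast
  obtain e2 where e2: "e2 > 0" "\<forall>u. t < u \<and> u < t + e2 \<longrightarrow> e u = w" using assms(2) unfolding right_val_def by blast
  have "e (t + min e1 e2 / 2) = v" using e1 by (simp add: e2(1))
  moreover have "e (t + min e1 e2 / 2) = w" using e2 by (simp add: e1(1))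
  ultimately show ?thesis by simp
qed

lemma finite_avoid:
  fixes F :: "real set"
  assumes "finite F" shows "\<exists>\<epsilon>>0. \<forall>d\<in>F. d \<noteq> t \<longrightarrow> \<epsilon> \<le> \<bar>d - t\<bar>"
  using assms
proof (induction F rule: finite_induct)
  case empty then show ?case by (intro exI[of _ 1]) auto
next
  case (insert d F)
  then obtain e where e: "e > 0" "\<forall>d\<in>F. d \<noteq> t \<longrightarrow> e \<le> \<bar>d - t\<bar>" by blast
  show ?case
  proof (cases "d = t")
    case True then show ?thesis using e by auto
  next
    case False then show ?thesis using e
      by (intro exI[of _ "min e \<bar>d - t\<bar>"]) auto
  qed
qed

lemma pre_run_right:
  assumes "pre_run T R" "0 \<le> t"
  shows "\<exists>\<epsilon>>0. \<forall>u w. t < u \<and> u < t + \<epsilon> \<and> t < w \<and> w < t + \<epsilon> \<longrightarrow> rho T R u = rho T R w"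
proof -
  obtain S where S: "finite S" "\<forall>u v. u < v \<and> {u..v} \<subseteq> {0..t+1} - S \<longrightarrow> rho T R u = rho T R v"
    using assms unfolding pre_run_def by (metis add_nonneg_pos zero_less_one)
  obtain e0 where e0: "e0 > 0" "\<forall>d\<in>S. d \<noteq> t \<longrightarrow> e0 \<le> \<bar>d - t\<bar>" using finite_avoid[OF S(1)] by blast
  define e where "e = min e0 1"
  have key: "rho T R u = rho T R w" if "t < u" "u < w" "w < t + e" for u w
  proof -
    have "{u..w} \<subseteq> {0..t+1} - S"
    proof
      fix z assume z: "z \<in> {u..w}"
      have "z \<notin> S"
      proof
        assume "z \<in> S"
        then have "e0 \<le> \<bar>z - t\<bar>" using e0 z that by auto
        then show False using z that e_def by auto
      qed
      then show "z \<in> {0..t+1} - S" using z that e_def assms(2) by auto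
    qed
    then show ?thesis using S(2) that by blast
  qed
  show ?thesis
    apply (rule exI[of _ e])
    using e0 e_def key by (metis linorder_neq_iff min_less_iff_conj zero_less_one)
qed

lemma pre_run_left:
  assumes "pre_run T R" "0 < t"
  shows "\<exists>\<epsilon>>0. \<epsilon> \<le> t \<and> (\<forall>u w. t - \<epsilon> < u \<and> u < t \<and> t - \<epsilon> < w \<and> w < t \<longrightarrow> rho T R u = rho T R w)"
proof -
  obtain S where S: "finite S" "\<forall>u v. u < v \<and> {u..v} \<subseteq> {0..t} - S \<longrightarrow> rho T R u = rho T R v"
    using assms unfolding pre_run_def by metis
  obtain e0 where e0: "e0 > 0" "\<forall>d\<in>S. d \<noteq> t \<longrightarrow> e0 \<le> \<bar>d - t\<bar>" using finite_avoid[OF S(1)] by blast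
  define e where "e = min e0 t"
  have key: "rho T R u = rho T R w" if "t - e < u" "u < w" "w < t" for u w
  proof -
    have "{u..w} \<subseteq> {0..t} - S"
    proof
      fix z assume z: "z \<in> {u..w}"
      have "z \<notin> S"
      proof
        assume "z \<in> S"
        then have "e0 \<le> \<bar>z - t\<bar>" using e0 z that by auto
        then show False using z that e_def by auto
      qed
      then show "z \<in> {0..t} - S" using z that e_def assms(2) by auto
    qed
    then show ?thesis using S(2) that by blast
  qed
  show ?thesis
    apply (rule exI[of _ e])
    using e0 e_def key assms(2) by (metis linorder_neq_iff min_less_iff_conj min.cobounded2)
qed

lemma ctrl_consistent:
  assumes "\<not> (SignalOpen_guard T dopen s c \<and> (\<exists>y\<in>T. Deadline s y = Fin c))"
  shows "consistent (upds T dopen W Controller s c)"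
  using assms unfolding consistent_def upds_def by auto

lemma changes_coming:
  assumes "y \<in> T" "TrackStatus s y = Coming" "Deadline s y = Infty"
  shows "changes (upds T dopen W Controller s c) s"
proof -
  have "UDL y (Fin (c+W)) \<in> upds T dopen W Controller s c" using assms by (auto simp: upds_def)
  then show ?thesis unfolding changes_def using assms by force
qed

lemma changes_empty:
  assumes "y \<in> T" "TrackStatus s y = Empty" "Deadline s y \<noteq> Infty"
  shows "changes (upds T dopen W Controller s c) s"
proof -
  have "UDL y Infty \<in> upds T dopen W Controller s c" using assms by (auto simp: upds_def)
  then show ?thesis unfolding changes_def using assms by force
qed

lemma changes_guard:
  assumes "SignalOpen_guard T dopen s c"
  shows "changes (upds T dopen W Controller s c) s"
proof -
  have "UDir Open \<in> upds T dopen W Controller s c" using assms by (auto simp: upds_def)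
  then show ?thesis unfolding changes_def using assms by (force simp: SignalOpen_guard_def)
qed

lemma changes_close:
  assumes "y \<in> T" "Deadline s y = Fin c" "Dir s = Open"
  shows "changes (upds T dopen W Controller s c) s"
proof -
  have "UDir Close \<in> upds T dopen W Controller s c" using assms by (auto simp: upds_def)
  then show ?thesis unfolding changes_def using assms by force
qed

lemma upds_UDir:
  "UDir a \<in> upds T dopen W A s c \<Longrightarrow> (a = Close \<and> (\<exists>y\<in>T. Deadline s y = Fin c)) \<or> (a = Open \<and> SignalOpen_guard T dopen s c)"
  by (cases A) (auto simp: upds_def split: if_splits)

lemma upds_UDL:
  "UDL x a \<in> upds T dopen W A s c \<Longrightarrow> (TrackStatus s x = Coming \<and> Deadline s x = Infty \<and> a = Fin (c+W)) \<or>
     (TrackStatus s x = Empty \<and> Deadline s x \<noteq> Infty \<and> a = Infty)"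
  by (cases A) (auto simp: upds_def split: if_splits)

lemma exec_TS[simp]: "TrackStatus (exec T dopen W M s c) = TrackStatus s"
  by (simp add: exec_def apply_upd_def)

lemma exec_D:
  "Deadline (exec T dopen W M s c) x = Deadline s x \<or>
   (TrackStatus s x = Coming \<and> Deadline s x = Infty \<and> Deadline (exec T dopen W M s c) x = Fin (c+W)) \<or>
   (TrackStatus s x = Empty \<and> Deadline s x \<noteq> Infty \<and> Deadline (exec T dopen W M s c) x = Infty)"
proof -
  define U where "U = (\<Union>A\<in>{A\<in>M. consistent (upds T dopen W A s c)}. upds T dopen W A s c)"
  have key: "UDL x a \<in> U \<Longrightarrow> (TrackStatus s x = Coming \<and> Deadline s x = Infty \<and> a = Fin (c+W)) \<or>
     (TrackStatus s x = Empty \<and> Deadline s x \<noteq> Infty \<and> a = Infty)" for a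
  proof -
    assume "UDL x a \<in> U"
    then obtain A where "UDL x a \<in> upds T dopen W A s c" unfolding U_def by blast
    then show ?thesis by (rule upds_UDL)
  qed
  have ex: "Deadline (exec T dopen W M s c) x = (if \<exists>a. UDL x a \<in> U then (THE a. UDL x a \<in> U) else Deadline s x)"
    unfolding exec_def apply_upd_def U_def by simp
  show ?thesis
  proof (cases "\<exists>a. UDL x a \<in> U")
    case False then show ?thesis using ex by simp
  next
    case True
    then obtain a where a: "UDL x a \<in> U" by blast
    from key[OF a] show ?thesis
    proof
      assume h: "TrackStatus s x = Coming \<and> Deadline s x = Infty \<and> a = Fin (c+W)"
      have "(THE a. UDL x a \<in> U) = Fin (c+W)"
      proof (rule the_equality)
        show "UDL x (Fin (c+W)) \<in> U" using a h by simp
        fix b assume "UDL x b \<in> U"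
        from key[OF this] h show "b = Fin (c+W)" by auto
      qed
      then show ?thesis using ex True h by simp
    next
      assume h: "TrackStatus s x = Empty \<and> Deadline s x \<noteq> Infty \<and> a = Infty"
      have "(THE a. UDL x a \<in> U) = Infty"
      proof (rule the_equality)
        show "UDL x (Infty) \<in> U" using a h by simp
        fix b assume "UDL x b \<in> U"
        from key[OF this] h show "b = Infty" by auto
      qed
      then show ?thesis using ex True h by simp
    qed
  qed
qed

lemma exec_Dir:
  assumes "\<not> SignalOpen_guard T dopen s c"
  shows "Dir (exec T dopen W M s c) = Dir s \<or> Dir (exec T dopen W M s c) = Close"
proof -
  define U where "U = (\<Union>A\<in>{A\<in>M. consistent (upds T dopen W A s c)}. upds T dopen W A s c)"
  have key: "UDir a \<in> U \<Longrightarrow> a = Close" for a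
  proof -
    assume "UDir a \<in> U"
    then obtain A where "UDir a \<in> upds T dopen W A s c" unfolding U_def by blast
    then show ?thesis using upds_UDir assms by blast
  qed
  have ex: "Dir (exec T dopen W M s c) = (if \<exists>a. UDir a \<in> U then (THE a. UDir a \<in> U) else Dir s)"
    unfolding exec_def apply_upd_def U_def by simp
  show ?thesis
  proof (cases "\<exists>a. UDir a \<in> U")
    case False then show ?thesis using ex by simp
  next
    case True
    have "(THE a. UDir a \<in> U) = Close"
      using True key by (metis the_equality)
    then show ?thesis using ex True by simp
  qed
qed

lemma exec_Dir_close:
  assumes "\<not> SignalOpen_guard T dopen s c" "Controller \<in> M" "y \<in> T" "Deadline s y = Fin c"
  shows "Dir (exec T dopen W M s c) = Close"
proof -
  define U where "U = (\<Union>A\<in>{A\<in>M. consistent (upds T dopen W A s c)}. upds T dopen W A s c)"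
  have key: "UDir a \<in> U \<Longrightarrow> a = Close" for a
  proof -
    assume "UDir a \<in> U"
    then obtain A where "UDir a \<in> upds T dopen W A s c" unfolding U_def by blast
    then show ?thesis using upds_UDir assms by blast
  qed
  have cons: "consistent (upds T dopen W Controller s c)"
    using ctrl_consistent assms(1) by blast
  have "UDir Close \<in> upds T dopen W Controller s c"
    using assms by (auto simp: upds_def)
  then have inU: "UDir Close \<in> U"
    unfolding U_def using assms cons by blast
  have ex: "Dir (exec T dopen W M s c) = (if \<exists>a. UDir a \<in> U then (THE a. UDir a \<in> U) else Dir s)"
    unfolding exec_def apply_upd_def U_def by simp
  have "(THE a. UDir a \<in> U) = Close"
    using inU key by (metis the_equality)
  then show ?thesis using ex inU by auto
qed

context
  fixes T :: "'tr set" and dopen W :: real and R :: "real \<Rightarrow> 'tr st"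
  assumes fin: "finite T" and run: "is_run T dopen W R" and imm: "immediate T dopen W R Controller"
begin

lemma pr: "pre_run T R" using run unfolding is_run_def by blast

lemma run_right:
  assumes "0 \<le> s" "right_val (rho T R) s v"
  shows "v = rho T R s \<or> ((\<exists>M. v = rst T (exec T dopen W M (R s) s)) \<and> TrackStatus v = TrackStatus (rho T R s))"
  using run assms unfolding is_run_def by blast

lemma run_left:
  assumes "0 < s" "left_val (rho T R) s v"
  shows "Deadline v = Deadline (rho T R s) \<and> Dir v = Dir (rho T R s)"
  using run assms unfolding is_run_def by (cases "v = rho T R s") auto

lemma right_exists:
  assumes "0 \<le> s" shows "\<exists>v. right_val (rho T R) s v"
proof -
  obtain e where e: "e > 0" "\<forall>u w. s < u \<and> u < s + e \<and> s < w \<and> w < s + e \<longrightarrow> rho T R u = rho T R w"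
    using pre_run_right[OF pr assms] by blast
  have "right_val (rho T R) s (rho T R (s + e/2))"
    unfolding right_val_def
  proof (intro exI[of _ e] conjI allI impI)
    fix u assume "s < u \<and> u < s + e"
    then show "rho T R u = rho T R (s + e/2)" using e(2)[rule_format, of u "s + e/2"] e(1) by simp
  qed (use e in simp)
  then show ?thesis by blast
qed

lemma left_exists:
  assumes "0 < s" shows "\<exists>v. left_val (rho T R) s v"
proof -
  obtain e where e: "e > 0" "\<forall>u w. s - e < u \<and> u < s \<and> s - e < w \<and> w < s \<longrightarrow> rho T R u = rho T R w"
    using pre_run_left[OF pr assms] by blast
  have "left_val (rho T R) s (rho T R (s - e/2))"
    unfolding left_val_def
  proof (intro exI[of _ e] conjI allI impI)
    fix u assume "s - e < u \<and> u < s"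
    then show "rho T R u = rho T R (s - e/2)" using e(2)[rule_format, of u "s - e/2"] e(1) by simp
  qed (use e in simp)
  then show ?thesis by blast
qed

lemma propagate:
  assumes "0 \<le> p" "p \<le> q" "P (rho T R p)"
    and RR: "\<And>s v. p \<le> s \<Longrightarrow> s < q \<Longrightarrow> P (rho T R s) \<Longrightarrow> right_val (rho T R) s v \<Longrightarrow> P v"
    and LL: "\<And>s v. p < s \<Longrightarrow> s \<le> q \<Longrightarrow> left_val (rho T R) s v \<Longrightarrow> P v \<Longrightarrow> P (rho T R s)"
  shows "\<forall>u. p \<le> u \<and> u \<le> q \<longrightarrow> P (rho T R u)"
proof -
  define A where "A = {r. p \<le> r \<and> r \<le> q \<and> (\<forall>u. p \<le> u \<and> u \<le> r \<longrightarrow> P (rho T R u))}"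
  have pA: "p \<in> A" unfolding A_def using assms by auto
  have bdd: "bdd_above A" unfolding A_def bdd_above_def by auto
  define s where "s = Sup A"
  have ps: "p \<le> s" unfolding s_def using pA bdd by (simp add: cSup_upper)
  have sq: "s \<le> q" unfolding s_def using pA by (intro cSup_least) (auto simp: A_def)
  have below: "P (rho T R u)" if hu: "p \<le> u" "u < s" for u
  proof -
    have "\<exists>r\<in>A. u < r" using less_cSup_iff[of A u] pA bdd hu s_def by blast
    then obtain r where "r \<in> A" "u < r" by blast
    then show ?thesis using hu unfolding A_def by auto
  qed
  have Ps: "P (rho T R s)"
  proof (cases "s = p")
    case True then show ?thesis using assms by simp
  next
    case False
    then have "p < s" using ps by simp
    then obtain v where v: "left_val (rho T R) s v" using left_exists assms(1) by force
    then obtain e where e: "e > 0" "\<forall>u. s - e < u \<and> u < s \<longrightarrow> rho T R u = v" unfolding left_val_def by blast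
    define u where "u = max p (s - e/2)"
    have u1: "p \<le> u" "u < s" "s - e < u" using e `p < s` unfolding u_def by auto
    have "rho T R u = v" using e(2) u1 by blast
    moreover have "P (rho T R u)" using below u1 by blast
    ultimately have "P v" by simp
    then show ?thesis using LL[OF `p < s` sq v] by simp
  qed
  have sA: "s \<in> A" unfolding A_def using ps sq below Ps by (auto simp: le_less)
  have "s = q"
  proof (rule ccontr)
    assume "s \<noteq> q"
    then have "s < q" using sq by simp
    obtain v where v: "right_val (rho T R) s v" using right_exists ps assms(1) by force
    then obtain e where e: "e > 0" "\<forall>u. s < u \<and> u < s + e \<longrightarrow> rho T R u = v" unfolding right_val_def by blast
    have Pv: "P v" using RR[OF ps `s < q` Ps v] .
    define r where "r = min q (s + e/2)"
    have "r \<in> A" unfolding A_def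
    proof (intro CollectI conjI allI impI)
      show "p \<le> r" using ps `s < q` e unfolding r_def by auto
      show "r \<le> q" unfolding r_def by auto
      fix u assume u: "p \<le> u \<and> u \<le> r"
      show "P (rho T R u)"
      proof (cases "u \<le> s")
        case True then show ?thesis using sA u unfolding A_def by auto
      next
        case False then have "rho T R u = v" using e u unfolding r_def by auto
        then show ?thesis using Pv by simp
      qed
    qed
    then have "r \<le> s" unfolding s_def using bdd by (simp add: cSup_upper)
    then show False using `s < q` e unfolding r_def by auto
  qed
  then show ?thesis using sA unfolding A_def by auto
qed

lemma nohit:
  assumes "\<forall>u w. l < u \<and> u < r \<and> l < w \<and> w < r \<longrightarrow> rho T R u = rho T R w" "l < r"
  shows "\<exists>F. finite F \<and> (\<forall>u. l < u \<and> u < r \<longrightarrow> (\<forall>y\<in>T. Deadline (R u) y = Fin u \<longrightarrow> u \<in> F))"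
proof -
  define w0 where "w0 = (l + r) / 2"
  define F where "F = (\<lambda>y. case Deadline (R w0) y of Fin d \<Rightarrow> d | Infty \<Rightarrow> l) ` T"
  have "finite F" unfolding F_def using fin by simp
  moreover have "u \<in> F" if "l < u" "u < r" "y \<in> T" "Deadline (R u) y = Fin u" for u y
  proof -
    have "rho T R u = rho T R w0" using assms(1)[rule_format, of u w0] assms(2) that unfolding w0_def by simp
    then have "Deadline (R w0) y = Fin u" using rho_eq[of T R u w0] that by auto
    then show ?thesis unfolding F_def using that by force
  qed
  ultimately show ?thesis by blast
qed

lemma good_right:
  assumes "0 \<le> t"
  shows "\<exists>\<epsilon>>0. (\<forall>u w. t < u \<and> u < t + \<epsilon> \<and> t < w \<and> w < t + \<epsilon> \<longrightarrow> rho T R u = rho T R w) \<and>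
     (\<forall>u. t < u \<and> u < t + \<epsilon> \<longrightarrow> (\<forall>y\<in>T. Deadline (R u) y \<noteq> Fin u))"
proof -
  obtain e where e: "e > 0" "\<forall>u w. t < u \<and> u < t + e \<and> t < w \<and> w < t + e \<longrightarrow> rho T R u = rho T R w"
    using pre_run_right[OF pr assms] by blast
  obtain F where F: "finite F" "\<forall>u. t < u \<and> u < t + e \<longrightarrow> (\<forall>y\<in>T. Deadline (R u) y = Fin u \<longrightarrow> u \<in> F)"
    using nohit[of t "t+e"] e by auto
  obtain e1 where e1: "e1 > 0" "\<forall>d\<in>F. d \<noteq> t \<longrightarrow> e1 \<le> \<bar>d - t\<bar>" using finite_avoid[OF F(1)] by blast
  show ?thesis
  proof (intro exI[of _ "min e e1"] conjI allI impI ballI)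
    show "0 < min e e1" using e e1 by simp
    show "rho T R u = rho T R w" if "t < u \<and> u < t + min e e1 \<and> t < w \<and> w < t + min e e1" for u w
      using that e(2)[rule_format, of u w] by linarith
    fix u y assume u: "t < u \<and> u < t + min e e1" and y: "y \<in> T"
    show "Deadline (R u) y \<noteq> Fin u"
    proof
      assume "Deadline (R u) y = Fin u"
      then have "u \<in> F" using F u y by auto
      then have "e1 \<le> \<bar>u - t\<bar>" using e1 u by auto
      then show False using u by auto
    qed
  qed
qed

lemma good_left:
  assumes "0 < t"
  shows "\<exists>\<epsilon>>0. \<epsilon> \<le> t \<and> (\<forall>u w. t - \<epsilon> < u \<and> u < t \<and> t - \<epsilon> < w \<and> w < t \<longrightarrow> rho T R u = rho T R w) \<and>
     (\<forall>u. t - \<epsilon> < u \<and> u < t \<longrightarrow> (\<forall>y\<in>T. Deadline (R u) y \<noteq> Fin u))"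
proof -
  obtain e where e: "e > 0" "e \<le> t" "\<forall>u w. t - e < u \<and> u < t \<and> t - e < w \<and> w < t \<longrightarrow> rho T R u = rho T R w"
    using pre_run_left[OF pr assms] by blast
  obtain F where F: "finite F" "\<forall>u. t - e < u \<and> u < t \<longrightarrow> (\<forall>y\<in>T. Deadline (R u) y = Fin u \<longrightarrow> u \<in> F)"
    using nohit[of "t-e" t] e by auto
  obtain e1 where e1: "e1 > 0" "\<forall>d\<in>F. d \<noteq> t \<longrightarrow> e1 \<le> \<bar>d - t\<bar>" using finite_avoid[OF F(1)] by blast
  show ?thesis
  proof (intro exI[of _ "min e e1"] conjI allI impI ballI)
    show "0 < min e e1" using e e1 by simp
    show "min e e1 \<le> t" using e by simp
    show "rho T R u = rho T R w" if "t - min e e1 < u \<and> u < t \<and> t - min e e1 < w \<and> w < t" for u w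
      using that e(3)[rule_format, of u w] by linarith
    fix u y assume u: "t - min e e1 < u \<and> u < t" and y: "y \<in> T"
    show "Deadline (R u) y \<noteq> Fin u"
    proof
      assume "Deadline (R u) y = Fin u"
      moreover have "t - e < u" using u by linarith
      ultimately have "u \<in> F" using F u y by blast
      then have "e1 \<le> \<bar>u - t\<bar>" using e1 u by auto
      then show False using u by auto
    qed
  qed
qed

lemma quiet:
  assumes "0 \<le> l" "\<forall>u w. l < u \<and> u < r \<and> l < w \<and> w < r \<longrightarrow> rho T R u = rho T R w"
    "l < u" "u < r" "\<forall>y\<in>T. Deadline (R u) y \<noteq> Fin u"
  shows "\<not> changes (upds T dopen W Controller (R u) u) (R u)"
proof
  assume ch: "changes (upds T dopen W Controller (R u) u) (R u)"
  have "consistent (upds T dopen W Controller (R u) u)"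
    by (rule ctrl_consistent) (use assms(5) in blast)
  then have en: "enabled T dopen W Controller (R u) u" unfolding enabled_def using ch by (rule conjI)
  have "0 \<le> u" using assms(1,3) by linarith
  then have "fires T dopen W R Controller u" using imm en unfolding immediate_def by blast
  then obtain v where v: "right_val (rho T R) u v" "v \<noteq> rho T R u" unfolding fires_def by blast
  then obtain e where e: "e > 0" "\<forall>w. u < w \<and> w < u + e \<longrightarrow> rho T R w = v" unfolding right_val_def by blast
  obtain m0 where m: "m0 > 0" "m0 \<le> e" "m0 \<le> r - u" using e(1) assms(4)
    by (metis diff_gt_0_iff_gt min.cobounded1 min.cobounded2 min_less_iff_conj)
  define w where "w = u + m0 / 2"
  have uw1: "u < w" using m unfolding w_def by linarith
  have uw2: "w < u + e" using m unfolding w_def by linarith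
  have uw3: "w < r" using m unfolding w_def by linarith
  note uw = uw1 uw2 uw3
  then have "rho T R w = v" using e(2) by blast
  moreover have "rho T R w = rho T R u" using assms(2)[rule_format, of w u] assms(3,4) uw by linarith
  ultimately show False using v by simp
qed

end

lemma ts_mono:
  assumes "\<forall>n<N. ts n < ts (Suc n)" "m \<le> n" "n \<le> N"
  shows "(ts m :: real) \<le> ts n"
  using assms(2,3)
proof (induction n)
  case 0 then show ?case by simp
next
  case (Suc n)
  show ?case
  proof (cases "m = Suc n")
    case True then show ?thesis by simp
  next
    case False
    then have "m \<le> n" using Suc.prems by simp
    then have "ts m \<le> ts n" using Suc by simp
    also have "ts n < ts (Suc n)" using assms(1) Suc.prems by simp
    finally show ?thesis by simp
  qed
qed

lemma ts_strict:
  assumes "\<forall>n<N. ts n < ts (Suc n)" "m < n" "n \<le> N"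
  shows "(ts m :: real) < ts n"
proof -
  have "ts m < ts (Suc m)" using assms by simp
  also have "ts (Suc m) \<le> ts n" using ts_mono[OF assms(1)] assms by simp
  finally show ?thesis .
qed

lemma find_n:
  fixes ts :: "nat \<Rightarrow> real"
  assumes "ts 0 \<le> u0" "u0 < ts m"
  shows "\<exists>n<m. ts n \<le> u0 \<and> u0 < ts (Suc n)"
  using assms(2)
proof (induction m)
  case 0 then show ?case using assms(1) by simp
next
  case (Suc m)
  show ?case
  proof (cases "u0 < ts m")
    case True then show ?thesis using Suc.IH less_SucI by blast
  next
    case False then show ?thesis using Suc.prems by auto
  qed
qed

lemma locate_core:
  fixes f :: "real \<Rightarrow> tstat" and ts :: "nat \<Rightarrow> real"
  assumes ts0: "ts 0 = 0" and mono: "\<forall>n<N. ts n < ts (Suc n)"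
    and ph: "\<forall>i. 3*i+3 \<le> N \<longrightarrow> train_phase dmin dmax f ts i" and N3: "3 dvd N"
    and n1: "ts n \<le> u0" and n2: "u0 < ts (Suc n)" and n3: "Suc n \<le> N"
    and ut: "u0 < t" and ft: "f t = Empty" and ne: "\<forall>u. u0 \<le> u \<and> u < t \<longrightarrow> f u \<noteq> Empty"
  shows "\<exists>c a b. 0 \<le> c \<and> c < a \<and> a + dmin \<le> b \<and> b \<le> t \<and> (\<forall>u. c \<le> u \<and> u < a \<longrightarrow> f u = Empty)
     \<and> (\<forall>u. a \<le> u \<and> u < b \<longrightarrow> f u = Coming) \<and> (\<forall>u. a \<le> u \<and> u < t \<longrightarrow> f u \<noteq> Empty)"
proof -
  define i where "i = n div 3"
  obtain j where j: "N = 3 * j" using N3 by blast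
  have i3: "3*i+3 \<le> N" using n3 j unfolding i_def by presburger
  have P: "train_phase dmin dmax f ts i" using ph i3 by blast
  have E: "\<forall>u. ts (3*i) \<le> u \<and> u < ts (3*i+1) \<longrightarrow> f u = Empty"
    and C: "\<forall>u. ts (3*i+1) \<le> u \<and> u < ts (3*i+2) \<longrightarrow> f u = Coming"
    and dm: "dmin \<le> ts (3*i+2) - ts (3*i+1)"
    and I: "\<forall>u. ts (3*i+2) \<le> u \<and> u < ts (3*i+3) \<longrightarrow> f u = InCrossing"
    using P unfolding train_phase_def by blast+
  have s1: "ts (3*i) < ts (3*i+1)" using ts_strict[OF mono, of "3*i" "3*i+1"] i3 by simp
  have s2: "ts (3*i+1) < ts (3*i+2)" using ts_strict[OF mono, of "3*i+1" "3*i+2"] i3 by simp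
  have s3: "ts (3*i+2) < ts (3*i+3)" using ts_strict[OF mono, of "3*i+2" "3*i+3"] i3 by simp
  have c0: "0 \<le> ts (3*i)" using ts_mono[OF mono, of 0 "3*i"] i3 ts0 by simp
  have "n mod 3 \<noteq> 0"
  proof
    assume "n mod 3 = 0"
    then have "n = 3*i" unfolding i_def by presburger
    then have "f u0 = Empty" using E n1 n2 by simp
    then show False using ne ut by auto
  qed
  then have nr: "3*i+1 \<le> n" "Suc n \<le> 3*i+3" unfolding i_def by presburger+
  have a_le: "ts (3*i+1) \<le> u0" using ts_mono[OF mono nr(1)] n1 n3 by simp
  have u0_lt: "u0 < ts (3*i+3)" using ts_mono[OF mono nr(2)] i3 n2 by simp
  have t_ge: "ts (3*i+3) \<le> t"
  proof (rule ccontr)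
    assume "\<not> ts (3*i+3) \<le> t"
    then have tl: "t < ts (3*i+3)" by simp
    have "ts (3*i+1) \<le> t" using a_le ut by simp
    then have "f t = Coming \<or> f t = InCrossing" using C I tl by (cases "t < ts (3*i+2)") auto
    then show False using ft by auto
  qed
  show ?thesis
  proof (intro exI conjI)
    show "0 \<le> ts (3*i)" by (rule c0)
    show "ts (3*i) < ts (3*i+1)" by (rule s1)
    show "ts (3*i+1) + dmin \<le> ts (3*i+2)" using dm by simp
    show "ts (3*i+2) \<le> t" using s3 t_ge by simp
    show "\<forall>u. ts (3*i) \<le> u \<and> u < ts (3*i+1) \<longrightarrow> f u = Empty" by (rule E)
    show "\<forall>u. ts (3*i+1) \<le> u \<and> u < ts (3*i+2) \<longrightarrow> f u = Coming" by (rule C)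
    show "\<forall>u. ts (3*i+1) \<le> u \<and> u < t \<longrightarrow> f u \<noteq> Empty"
    proof (intro allI impI)
      fix u assume u: "ts (3*i+1) \<le> u \<and> u < t"
      show "f u \<noteq> Empty"
      proof (cases "u < ts (3*i+3)")
        case True
        then show ?thesis using C I u by (cases "u < ts (3*i+2)") auto
      next
        case False then show ?thesis using ne u u0_lt by auto
      qed
    qed
  qed
qed


context
  fixes T :: "'tr set" and dopen W :: real and R :: "real \<Rightarrow> 'tr st"
  assumes fin: "finite T" and run: "is_run T dopen W R" and imm: "immediate T dopen W R Controller"
begin

lemma zeno:
  fixes ts :: "nat \<Rightarrow> real"
  assumes x: "x \<in> T" and ts0: "ts 0 = 0" and mono: "\<forall>n. ts n < ts (Suc n)"
    and ph: "\<forall>i. train_phase dmin dmax (\<lambda>u. TrackStatus (R u) x) ts i"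
    and "0 \<le> u0" "u0 < t"
  shows "\<exists>m. u0 < ts m"
proof (rule ccontr)
  assume "\<not> (\<exists>m. u0 < ts m)"
  then have bnd: "\<forall>m. ts m \<le> u0" by (meson not_less)
  have "t > 0" using assms by simp
  then obtain S where S: "finite S" "\<forall>u v. u < v \<and> {u..v} \<subseteq> {0..t} - S \<longrightarrow> rho T R u = rho T R v"
    using pr[OF fin run imm] unfolding pre_run_def by blast
  have mono': "\<forall>n<N. ts n < ts (Suc n)" for N using mono by blast
  have inS: "ts (3*i+1) \<in> S" for i
  proof (rule ccontr)
    assume nS: "ts (3*i+1) \<notin> S"
    define p where "p = ts (3*i+1)"
    define c where "c = ts (3*i)"
    have cp: "c < p" unfolding c_def p_def using mono by simp
    have c0: "0 \<le> c" unfolding c_def using ts_mono[OF mono'[of "3*i"], of 0 "3*i"] ts0 by simp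
    obtain e where e: "e > 0" "\<forall>d\<in>S. d \<noteq> p \<longrightarrow> e \<le> \<bar>d - p\<bar>" using finite_avoid[OF S(1)] by blast
    define q where "q = max c (p - e/2)"
    have qp: "q < p" "c \<le> q" "p - e/2 \<le> q" unfolding q_def using cp e by auto
    have "{q..p} \<subseteq> {0..t} - S"
    proof
      fix z assume z: "z \<in> {q..p}"
      have "z \<notin> S"
      proof
        assume zS: "z \<in> S"
        then have "z \<noteq> p" using nS p_def by auto
        then have "e \<le> \<bar>z - p\<bar>" using e zS by auto
        then show False using z qp e by auto
      qed
      moreover have "p \<le> u0" using bnd p_def by simp
      moreover have "0 \<le> z" "z \<le> t" using z qp c0 \<open>p \<le> u0\<close> \<open>u0 < t\<close> by auto
      ultimately show "z \<in> {0..t} - S" by simp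
    qed
    then have "rho T R q = rho T R p" using S(2)[rule_format, of q p] qp by blast
    then have "TrackStatus (R q) x = TrackStatus (R p) x" using rho_eq[of T R q p] x by blast
    moreover have phi: "train_phase dmin dmax (\<lambda>u. TrackStatus (R u) x) ts i" using ph by blast
    moreover have "TrackStatus (R q) x = Empty" using phi qp unfolding train_phase_def c_def p_def by auto
    moreover have "TrackStatus (R p) x = Coming"
    proof -
      have "ts (3*i+1) < ts (Suc (3*i+1))" using mono by blast
      then have "ts (3*i+1) < ts (3*i+2)" by simp
      then show ?thesis using phi unfolding train_phase_def p_def by auto
    qed
    ultimately show False by simp
  qed
  have inj: "inj (\<lambda>i. ts (3*i+1))"
  proof (rule injI)
    fix i j assume h: "ts (3*i+1) = ts (3*j+1)"
    show "i = j"
    proof (rule ccontr)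
      assume "i \<noteq> j"
      then have "3*i+1 < 3*j+1 \<or> 3*j+1 < 3*i+1" by auto
      then show False
      proof
        assume "3*i+1 < 3*j+1"
        then have "ts (3*i+1) < ts (3*j+1)" using ts_strict[OF mono'[of "3*j+1"]] by blast
        then show False using h by simp
      next
        assume "3*j+1 < 3*i+1"
        then have "ts (3*j+1) < ts (3*i+1)" using ts_strict[OF mono'[of "3*i+1"]] by blast
        then show False using h by simp
      qed
    qed
  qed
  have "range (\<lambda>i. ts (3*i+1)) \<subseteq> S" using inS by auto
  then have "finite (range (\<lambda>i. ts (3*i+1)))" using S(1) finite_subset by blast
  then show False using finite_imageD[OF _ inj] by simp
qed

lemma locate:
  assumes x: "x \<in> T" and tm: "train_motion dmin dmax (\<lambda>u. TrackStatus (R u) x)"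
    and u0: "0 \<le> u0" "u0 < t" and ft: "TrackStatus (R t) x = Empty"
    and ne: "\<forall>u. u0 \<le> u \<and> u < t \<longrightarrow> TrackStatus (R u) x \<noteq> Empty"
  shows "\<exists>c a b. 0 \<le> c \<and> c < a \<and> a + dmin \<le> b \<and> b \<le> t \<and> (\<forall>u. c \<le> u \<and> u < a \<longrightarrow> TrackStatus (R u) x = Empty)
     \<and> (\<forall>u. a \<le> u \<and> u < b \<longrightarrow> TrackStatus (R u) x = Coming) \<and> (\<forall>u. a \<le> u \<and> u < t \<longrightarrow> TrackStatus (R u) x \<noteq> Empty)"
proof -
  obtain ts where ts0: "ts 0 = 0" and alt: "((\<forall>n. ts n < ts (Suc n)) \<and> (\<forall>i. train_phase dmin dmax (\<lambda>u. TrackStatus (R u) x) ts i)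
      \<or>
      (\<exists>k. 3 dvd k \<and> (\<forall>n<k. ts n < ts (Suc n)) \<and>
           (\<forall>i. 3*i+3 \<le> k \<longrightarrow> train_phase dmin dmax (\<lambda>u. TrackStatus (R u) x) ts i) \<and>
           (\<forall>u. ts k \<le> u \<longrightarrow> TrackStatus (R u) x = Empty)))"
    using tm unfolding train_motion_def by blast
  from alt show ?thesis
  proof
    assume h: "(\<forall>n. ts n < ts (Suc n)) \<and> (\<forall>i. train_phase dmin dmax (\<lambda>u. TrackStatus (R u) x) ts i)"
    then obtain m where "u0 < ts m" using zeno[of x ts dmin dmax u0 t] x ts0 u0 by blast
    then obtain n where n: "ts n \<le> u0" "u0 < ts (Suc n)" using find_n[of ts u0 m] ts0 u0 by auto
    have m1: "\<forall>n'<3 * Suc n. ts n' < ts (Suc n')" using h by blast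
    have m2: "\<forall>i. 3*i+3 \<le> 3 * Suc n \<longrightarrow> train_phase dmin dmax (\<lambda>u. TrackStatus (R u) x) ts i" using h by blast
    have m3: "3 dvd (3 * Suc n)" by simp
    have m4: "Suc n \<le> 3 * Suc n" by simp
    show ?thesis using locate_core[OF ts0 m1 m2 m3 n(1) n(2) m4 u0(2)] ft ne by simp
  next
    assume "\<exists>k. 3 dvd k \<and> (\<forall>n<k. ts n < ts (Suc n)) \<and>
           (\<forall>i. 3*i+3 \<le> k \<longrightarrow> train_phase dmin dmax (\<lambda>u. TrackStatus (R u) x) ts i) \<and>
           (\<forall>u. ts k \<le> u \<longrightarrow> TrackStatus (R u) x = Empty)"
    then obtain k where k: "3 dvd k" "\<forall>n<k. ts n < ts (Suc n)"
      "\<forall>i. 3*i+3 \<le> k \<longrightarrow> train_phase dmin dmax (\<lambda>u. TrackStatus (R u) x) ts i"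
      "\<forall>u. ts k \<le> u \<longrightarrow> TrackStatus (R u) x = Empty" by blast
    have "u0 < ts k"
    proof (rule ccontr)
      assume "\<not> u0 < ts k"
      then have "TrackStatus (R u0) x = Empty" using k(4) by simp
      then show False using ne u0 by auto
    qed
    then obtain n where n: "n < k" "ts n \<le> u0" "u0 < ts (Suc n)" using find_n[of ts u0 k] ts0 u0 by auto
    have m4: "Suc n \<le> k" using n(1) by simp
    show ?thesis using locate_core[OF ts0 k(2) k(3) k(1) n(2) n(3) m4 u0(2)] ft ne by simp
  qed
qed

end

lemma pos_min2: "(0::real) < a \<Longrightarrow> 0 < b \<Longrightarrow> \<exists>m>0. m \<le> a \<and> m \<le> b"
  by (intro exI[of _ "min a b"]) auto

lemma pos_min3: "(0::real) < a \<Longrightarrow> 0 < b \<Longrightarrow> 0 < c \<Longrightarrow> \<exists>m>0. m \<le> a \<and> m \<le> b \<and> m \<le> c"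
  by (intro exI[of _ "min a (min b c)"]) auto

context
  fixes T :: "'tr set" and dopen W :: real and R :: "real \<Rightarrow> 'tr st"
  assumes fin: "finite T" and run: "is_run T dopen W R" and imm: "immediate T dopen W R Controller"
begin

lemma becomes_empty:
  assumes x: "x \<in> T" and tm: "train_motion dmin dmax (\<lambda>u. TrackStatus (R u) x)"
    and W: "0 < W" "W < dmin" and dop: "0 < dopen"
    and u0: "0 \<le> u0" "u0 < t" and ft: "TrackStatus (R t) x = Empty"
    and ne: "\<forall>u. u0 \<le> u \<and> u < t \<longrightarrow> TrackStatus (R u) x \<noteq> Empty"
  shows "Dir (R t) = Close \<and> (\<exists>d<t. Deadline (R t) x = Fin d)"
proof -
  obtain c a b where c0: "0 \<le> c" and ca: "c < a" and ab: "a + dmin \<le> b" and bt: "b \<le> t"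
    and E: "\<forall>u. c \<le> u \<and> u < a \<longrightarrow> TrackStatus (R u) x = Empty"
    and C: "\<forall>u. a \<le> u \<and> u < b \<longrightarrow> TrackStatus (R u) x = Coming"
    and NE: "\<forall>u. a \<le> u \<and> u < t \<longrightarrow> TrackStatus (R u) x \<noteq> Empty"
    using locate[OF fin run imm x tm u0 ft ne] by blast
  have t0: "0 < t" using u0 by simp
  have Da: "Deadline (R a) x = Infty"
  proof -
    obtain e where e: "e > 0"
      "\<forall>u w. c < u \<and> u < c + e \<and> c < w \<and> w < c + e \<longrightarrow> rho T R u = rho T R w"
      "\<forall>u. c < u \<and> u < c + e \<longrightarrow> (\<forall>y\<in>T. Deadline (R u) y \<noteq> Fin u)"
      using good_right[OF fin run imm c0] by blast
    obtain m where m: "m > 0" "m \<le> e" "m \<le> a - c" using pos_min2[of e "a - c"] e(1) ca by auto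
    define u1 where "u1 = c + m/2"
    have u1: "c < u1" "u1 < c + e" "u1 < a" using m unfolding u1_def by auto
    have nc: "\<not> changes (upds T dopen W Controller (R u1) u1) (R u1)"
      using quiet[OF fin run imm c0 e(2) u1(1) u1(2)] e(3) u1 by blast
    have "TrackStatus (R u1) x = Empty" using E u1 by auto
    then have D1: "Deadline (R u1) x = Infty" using nc changes_empty[OF x] by blast
    have "\<forall>u. u1 \<le> u \<and> u \<le> a \<longrightarrow> Deadline (rho T R u) x = Infty"
    proof (rule propagate[OF fin run imm, where P = "\<lambda>v. Deadline v x = Infty"])
      show "0 \<le> u1" using u1 c0 by simp
      show "u1 \<le> a" using u1 by simp
      show "Deadline (rho T R u1) x = Infty" using D1 x by simp
    next
      fix s v assume s: "u1 \<le> s" "s < a" and Ps: "Deadline (rho T R s) x = Infty"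
        and v: "right_val (rho T R) s v"
      have s0: "0 \<le> s" using s u1 c0 by simp
      have Es: "TrackStatus (R s) x = Empty" using E s u1 by auto
      have Ds: "Deadline (R s) x = Infty" using Ps x by simp
      from run_right[OF fin run imm s0 v] show "Deadline v x = Infty"
      proof
        assume "v = rho T R s" then show ?thesis using Ps by simp
      next
        assume "(\<exists>M. v = rst T (exec T dopen W M (R s) s)) \<and> TrackStatus v = TrackStatus (rho T R s)"
        then obtain M where M: "v = rst T (exec T dopen W M (R s) s)" by blast
        have "Deadline v x = Deadline (exec T dopen W M (R s) s) x" using M x by simp
        then show ?thesis using exec_D[of T dopen W M "R s" s x] Es Ds by auto
      qed
    next
      fix s v assume s: "u1 < s" "s \<le> a" and v: "left_val (rho T R) s v" and Pv: "Deadline v x = Infty"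
      have "0 < s" using s u1 c0 by simp
      then show "Deadline (rho T R s) x = Infty" using run_left[OF fin run imm _ v] Pv by simp
    qed
    then show ?thesis using u1 x by force
  qed
  have a0: "0 \<le> a" using c0 ca by simp
  have Ca: "TrackStatus (R a) x = Coming" using C ab W by auto
  obtain v1 where v1: "right_val (rho T R) a v1" using right_exists[OF fin run imm a0] by blast
  then obtain e1 where e1: "e1 > 0" "\<forall>u. a < u \<and> u < a + e1 \<longrightarrow> rho T R u = v1"
    unfolding right_val_def by blast
  have Dv1: "Deadline v1 x = Fin (a + W)"
  proof -
    obtain e2 where e2: "e2 > 0"
      "\<forall>u w. a < u \<and> u < a + e2 \<and> a < w \<and> w < a + e2 \<longrightarrow> rho T R u = rho T R w"
      "\<forall>u. a < u \<and> u < a + e2 \<longrightarrow> (\<forall>y\<in>T. Deadline (R u) y \<noteq> Fin u)"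
      using good_right[OF fin run imm a0] by blast
    have ba: "0 < b - a" using ab W by simp
    obtain m where m: "m > 0" "m \<le> e1" "m \<le> e2" "m \<le> b - a" using pos_min3[OF e1(1) e2(1) ba] by blast
    define w where "w = a + m/2"
    have w: "a < w" "w < a + e1" "w < a + e2" "w < b" using m unfolding w_def by auto
    have nc: "\<not> changes (upds T dopen W Controller (R w) w) (R w)"
      using quiet[OF fin run imm a0 e2(2) w(1) w(3)] e2(3) w by blast
    have "TrackStatus (R w) x = Coming" using C w by auto
    then have Dw: "Deadline (R w) x \<noteq> Infty" using nc changes_coming[OF x] by blast
    have "rho T R w = v1" using e1 w by blast
    then have Dwv: "Deadline v1 x = Deadline (R w) x" using x by (metis rho_simps(3))
    then have "v1 \<noteq> rho T R a" using Dw Da x by auto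
    then have "(\<exists>M. v1 = rst T (exec T dopen W M (R a) a))" using run_right[OF fin run imm a0 v1] by blast
    then obtain M where M: "v1 = rst T (exec T dopen W M (R a) a)" by blast
    have "Deadline v1 x = Deadline (exec T dopen W M (R a) a) x" using M x by simp
    then show ?thesis using exec_D[of T dopen W M "R a" a x] Ca Da Dw Dwv by auto
  qed
  obtain m1 where m1: "m1 > 0" "m1 \<le> e1" "m1 \<le> W" using pos_min2[OF e1(1) W(1)] by blast
  define p where "p = a + m1/2"
  have p: "a < p" "p < a + e1" "p < a + W" using m1 unfolding p_def by auto
  have eb: "a + W < b" using ab W by simp
  have DD: "\<forall>u. p \<le> u \<and> u \<le> t \<longrightarrow> Deadline (rho T R u) x = Fin (a + W)"
  proof (rule propagate[OF fin run imm, where P = "\<lambda>v. Deadline v x = Fin (a + W)"])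
    show "0 \<le> p" using p a0 by simp
    show "p \<le> t" using p eb bt by simp
    have "rho T R p = v1" using e1 p by blast
    then show "Deadline (rho T R p) x = Fin (a + W)" using Dv1 by simp
  next
    fix s v assume s: "p \<le> s" "s < t" and Ps: "Deadline (rho T R s) x = Fin (a + W)"
      and v: "right_val (rho T R) s v"
    have s0: "0 \<le> s" using s p a0 by simp
    have NEs: "TrackStatus (R s) x \<noteq> Empty" using NE s p by auto
    have Ds: "Deadline (R s) x = Fin (a + W)" using Ps x by simp
    from run_right[OF fin run imm s0 v] show "Deadline v x = Fin (a + W)"
    proof
      assume "v = rho T R s" then show ?thesis using Ps by simp
    next
      assume "(\<exists>M. v = rst T (exec T dopen W M (R s) s)) \<and> TrackStatus v = TrackStatus (rho T R s)"
      then obtain M where M: "v = rst T (exec T dopen W M (R s) s)" by blast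
      have "Deadline v x = Deadline (exec T dopen W M (R s) s) x" using M x by simp
      then show ?thesis using exec_D[of T dopen W M "R s" s x] NEs Ds by auto
    qed
  next
    fix s v assume s: "p < s" "s \<le> t" and v: "left_val (rho T R) s v" and Pv: "Deadline v x = Fin (a + W)"
    have "0 < s" using s p a0 by simp
    then show "Deadline (rho T R s) x = Fin (a + W)" using run_left[OF fin run imm _ v] Pv by simp
  qed
  define e where "e = a + W"
  have et: "e < t" using eb bt unfolding e_def by simp
  have pe: "p < e" using p unfolding e_def by simp
  have De: "Deadline (R e) x = Fin e" using DD pe et x unfolding e_def by force
  have Dt: "Deadline (R t) x = Fin e" using DD pe et x unfolding e_def by force
  have e0: "0 \<le> e" using pe p a0 by simp
  have Ce: "TrackStatus (R e) x = Coming" using C pe p eb unfolding e_def by auto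
  have nge: "\<not> SignalOpen_guard T dopen (R e) e"
  proof
    assume "SignalOpen_guard T dopen (R e) e"
    then have "safe_track dopen (R e) e x" using x unfolding SignalOpen_guard_def SafeToOpen_def by blast
    then show False using Ce De dop unfolding safe_track_def by simp
  qed
  obtain v2 where v2: "right_val (rho T R) e v2" using right_exists[OF fin run imm e0] by blast
  have Dv2: "Dir v2 = Close"
  proof (cases "Dir (R e) = Close")
    case True
    from run_right[OF fin run imm e0 v2] show ?thesis
    proof
      assume "v2 = rho T R e" then show ?thesis using True by simp
    next
      assume "(\<exists>M. v2 = rst T (exec T dopen W M (R e) e)) \<and> TrackStatus v2 = TrackStatus (rho T R e)"
      then obtain M where M: "v2 = rst T (exec T dopen W M (R e) e)" by blast
      then show ?thesis using exec_Dir[OF nge, of W M] True by auto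
    qed
  next
    case False
    then have "Dir (R e) = Open" by (cases "Dir (R e)") auto
    then have ch: "changes (upds T dopen W Controller (R e) e) (R e)" using changes_close[OF x De] by blast
    have "consistent (upds T dopen W Controller (R e) e)"
      by (rule ctrl_consistent) (use nge in blast)
    then have en: "enabled T dopen W Controller (R e) e" unfolding enabled_def using ch by (rule conjI)
    then have "fires T dopen W R Controller e" using imm e0 unfolding immediate_def by blast
    then obtain v' M where v': "right_val (rho T R) e v'" "Controller \<in> M"
      "v' = rst T (exec T dopen W M (R e) e)" unfolding fires_def by blast
    have "v' = v2" using right_val_unique[OF v'(1) v2] .
    moreover have "Dir v' = Dir (exec T dopen W M (R e) e)" using v'(3) by simp
    ultimately show ?thesis using exec_Dir_close[OF nge v'(2) x De, of W] by simp
  qed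
  obtain e3 where e3: "e3 > 0" "\<forall>u. e < u \<and> u < e + e3 \<longrightarrow> rho T R u = v2"
    using v2 unfolding right_val_def by blast
  have te: "0 < t - e" using et by simp
  obtain m2 where m2: "m2 > 0" "m2 \<le> e3" "m2 \<le> t - e" using pos_min2[OF e3(1) te] by blast
  define p2 where "p2 = e + m2/2"
  have p2: "e < p2" "p2 < e + e3" "p2 < t" using m2 unfolding p2_def by auto
  have "\<forall>u. p2 \<le> u \<and> u \<le> t \<longrightarrow> Dir (rho T R u) = Close"
  proof (rule propagate[OF fin run imm, where P = "\<lambda>v. Dir v = Close"])
    show "0 \<le> p2" using p2 e0 by simp
    show "p2 \<le> t" using p2 by simp
    have "rho T R p2 = v2" using e3 p2 by blast
    then show "Dir (rho T R p2) = Close" using Dv2 by simp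
  next
    fix s v assume s: "p2 \<le> s" "s < t" and Ps: "Dir (rho T R s) = Close"
      and v: "right_val (rho T R) s v"
    have s0: "0 \<le> s" using s p2 e0 by simp
    have NEs: "TrackStatus (R s) x \<noteq> Empty" using NE s p2 pe p by auto
    have Ds: "Deadline (R s) x = Fin e" using DD s p2 pe x unfolding e_def by force
    have ngs: "\<not> SignalOpen_guard T dopen (R s) s"
    proof
      assume "SignalOpen_guard T dopen (R s) s"
      then have "safe_track dopen (R s) s x" using x unfolding SignalOpen_guard_def SafeToOpen_def by blast
      then show False using NEs Ds dop s p2 unfolding safe_track_def by simp
    qed
    from run_right[OF fin run imm s0 v] show "Dir v = Close"
    proof
      assume "v = rho T R s" then show ?thesis using Ps by simp
    next
      assume "(\<exists>M. v = rst T (exec T dopen W M (R s) s)) \<and> TrackStatus v = TrackStatus (rho T R s)"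
      then obtain M where M: "v = rst T (exec T dopen W M (R s) s)" by blast
      then show ?thesis using exec_Dir[OF ngs, of W M] Ps by auto
    qed
  next
    fix s v assume s: "p2 < s" "s \<le> t" and v: "left_val (rho T R) s v" and Pv: "Dir v = Close"
    have "0 < s" using s p2 e0 by simp
    then show "Dir (rho T R s) = Close" using run_left[OF fin run imm _ v] Pv by simp
  qed
  then have "Dir (R t) = Close" using p2 by force
  then show ?thesis using Dt et by blast
qed

end

context
  fixes T :: "'tr set" and dopen W :: real and R :: "real \<Rightarrow> 'tr st"
  assumes fin: "finite T" and run: "is_run T dopen W R" and imm: "immediate T dopen W R Controller"
begin

lemma safe_becomes:
  assumes t0: "0 < t" and St: "SafeToOpen T dopen (R t) t" and ep: "\<epsilon> > 0"
    and nS: "\<forall>u. t - \<epsilon> < u \<and> u < t \<longrightarrow> \<not> SafeToOpen T dopen (R u) u" and dop: "0 < dopen"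
  shows "\<exists>x\<in>T. \<exists>u0. 0 \<le> u0 \<and> u0 < t \<and> TrackStatus (R t) x = Empty \<and> TrackStatus (R u0) x \<noteq> Empty \<and>
     (\<forall>u. u0 \<le> u \<and> u < t \<longrightarrow> TrackStatus (R u) x = TrackStatus (R u0) x)"
proof -
  obtain e0 where e0: "e0 > 0" "e0 \<le> t" "\<forall>u w. t - e0 < u \<and> u < t \<and> t - e0 < w \<and> w < t \<longrightarrow> rho T R u = rho T R w"
    using pre_run_left[OF pr[OF fin run imm] t0] by blast
  obtain m where m: "m > 0" "m \<le> e0" "m \<le> \<epsilon>" using pos_min2[OF e0(1) ep] by blast
  define u0 where "u0 = t - m/2"
  have u0: "t - e0 < u0" "t - \<epsilon> < u0" "u0 < t" "0 \<le> u0" using m e0 unfolding u0_def by auto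
  have "\<not> SafeToOpen T dopen (R u0) u0" using nS u0 by blast
  then obtain x where x: "x \<in> T" "\<not> safe_track dopen (R u0) u0 x" unfolding SafeToOpen_def by blast
  then have NE0: "TrackStatus (R u0) x \<noteq> Empty" and nl: "\<not> ext_less (Fin (u0 + dopen)) (Deadline (R u0) x)"
    unfolding safe_track_def by auto
  obtain d where d: "Deadline (R u0) x = Fin d" using nl by (cases "Deadline (R u0) x") auto
  have dle: "d \<le> u0 + dopen" using nl d by simp
  have const: "rho T R u = rho T R u0" if "u0 \<le> u" "u < t" for u
    using e0(3)[rule_format, of u u0] that u0 by linarith
  have lv: "left_val (rho T R) t (rho T R u0)"
    unfolding left_val_def
  proof (intro exI[of _ e0] conjI allI impI)
    show "0 < e0" by (rule e0(1))
    fix u assume "t - e0 < u \<and> u < t"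
    then show "rho T R u = rho T R u0" using e0(3)[rule_format, of u u0] u0 by linarith
  qed
  have "Deadline (rho T R u0) = Deadline (rho T R t)" using run_left[OF fin run imm t0 lv] by simp
  then have Dt: "Deadline (R t) x = Fin d" using d x by (metis rho_simps(3))
  have "safe_track dopen (R t) t x" using St x unfolding SafeToOpen_def by blast
  then have Et: "TrackStatus (R t) x = Empty" using Dt dle u0 unfolding safe_track_def by auto
  have "\<forall>u. u0 \<le> u \<and> u < t \<longrightarrow> TrackStatus (R u) x = TrackStatus (R u0) x"
  proof (intro allI impI)
    fix u assume "u0 \<le> u \<and> u < t"
    then have "rho T R u = rho T R u0" using const by blast
    then show "TrackStatus (R u) x = TrackStatus (R u0) x" using x(1) by (metis rho_simps(2))
  qed
  then show ?thesis using x(1) u0 Et NE0 by blast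
qed

lemma guard_left:
  assumes t0: "0 < t" and g: "SignalOpen_guard T dopen (R t) t"
  shows "\<exists>\<epsilon>>0. \<forall>u. t - \<epsilon> < u \<and> u < t \<longrightarrow> \<not> SafeToOpen T dopen (R u) u"
proof -
  obtain e where e: "e > 0" "e \<le> t" "\<forall>u w. t - e < u \<and> u < t \<and> t - e < w \<and> w < t \<longrightarrow> rho T R u = rho T R w"
    "\<forall>u. t - e < u \<and> u < t \<longrightarrow> (\<forall>y\<in>T. Deadline (R u) y \<noteq> Fin u)"
    using good_left[OF fin run imm t0] by blast
  have l0: "0 \<le> t - e" using e by simp
  show ?thesis
  proof (intro exI[of _ e] conjI allI impI)
    show "0 < e" by (rule e(1))
    fix u assume u: "t - e < u \<and> u < t"
    have lv: "left_val (rho T R) t (rho T R u)"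
      unfolding left_val_def
    proof (intro exI[of _ e] conjI allI impI)
      show "0 < e" by (rule e(1))
      fix w assume "t - e < w \<and> w < t"
      then show "rho T R w = rho T R u" using e(3)[rule_format, of w u] u by linarith
    qed
    have "Dir (rho T R u) = Dir (rho T R t)" using run_left[OF fin run imm t0 lv] by simp
    then have Du: "Dir (R u) = Close" using g unfolding SignalOpen_guard_def by simp
    have nc: "\<not> changes (upds T dopen W Controller (R u) u) (R u)"
      using quiet[OF fin run imm l0 e(3)] u e(4) by blast
    show "\<not> SafeToOpen T dopen (R u) u"
    proof
      assume "SafeToOpen T dopen (R u) u"
      then have "SignalOpen_guard T dopen (R u) u" using Du unfolding SignalOpen_guard_def by simp
      then show False using nc changes_guard by blast
    qed
  qed
qed

lemma caseB:
  assumes t0: "0 \<le> t" and nS: "\<not> SafeToOpen T dopen (R t) t" and ep: "\<epsilon> > 0"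
    and S: "\<forall>u. t < u \<and> u < t + \<epsilon> \<longrightarrow> SafeToOpen T dopen (R u) u" and dop: "0 < dopen"
  shows False
proof -
  obtain x where x: "x \<in> T" "\<not> safe_track dopen (R t) t x" using nS unfolding SafeToOpen_def by blast
  then have NE: "TrackStatus (R t) x \<noteq> Empty" and nl: "\<not> ext_less (Fin (t + dopen)) (Deadline (R t) x)"
    unfolding safe_track_def by auto
  obtain d where d: "Deadline (R t) x = Fin d" using nl by (cases "Deadline (R t) x") auto
  have dle: "d \<le> t + dopen" using nl d by simp
  obtain v where v: "right_val (rho T R) t v" using right_exists[OF fin run imm t0] by blast
  have vx: "TrackStatus v x = TrackStatus (R t) x \<and> Deadline v x = Fin d"
    using run_right[OF fin run imm t0 v]
  proof
    assume "v = rho T R t" then show ?thesis using x d by simp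
  next
    assume h: "(\<exists>M. v = rst T (exec T dopen W M (R t) t)) \<and> TrackStatus v = TrackStatus (rho T R t)"
    then obtain M where M: "v = rst T (exec T dopen W M (R t) t)" by blast
    have "TrackStatus v x = TrackStatus (R t) x" using h x by simp
    moreover have "Deadline v x = Deadline (exec T dopen W M (R t) t) x" using M x by simp
    then have "Deadline v x = Fin d" using exec_D[of T dopen W M "R t" t x] d NE by auto
    ultimately show ?thesis by simp
  qed
  obtain e1 where e1: "e1 > 0" "\<forall>u. t < u \<and> u < t + e1 \<longrightarrow> rho T R u = v"
    using v unfolding right_val_def by blast
  obtain m where m: "m > 0" "m \<le> e1" "m \<le> \<epsilon>" using pos_min2[OF e1(1) ep] by blast
  define u where "u = t + m/2"
  have u: "t < u" "u < t + e1" "u < t + \<epsilon>" using m unfolding u_def by auto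
  have "rho T R u = v" using e1 u by blast
  then have "TrackStatus (R u) x = TrackStatus v x" "Deadline (R u) x = Deadline v x"
    using x(1) by (metis rho_simps(2), metis rho_simps(3))
  then have "TrackStatus (R u) x \<noteq> Empty" "Deadline (R u) x = Fin d" using vx NE by auto
  moreover have "safe_track dopen (R u) u x" using S u x(1) unfolding SafeToOpen_def by blast
  ultimately show False using dle u unfolding safe_track_def by auto
qed

lemma guard_fires:
  assumes t0: "0 < t" and g: "SignalOpen_guard T dopen (R t) t"
    and tm: "\<forall>x\<in>T. train_motion dmin dmax (\<lambda>u. TrackStatus (R u) x)"
    and W: "0 < W" "W < dmin" and dop: "0 < dopen"
  shows "fires T dopen W R Controller t"
proof -
  have nohit: "\<not> (\<exists>y\<in>T. Deadline (R t) y = Fin t)"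
  proof
    assume "\<exists>y\<in>T. Deadline (R t) y = Fin t"
    then obtain y where y: "y \<in> T" "Deadline (R t) y = Fin t" by blast
    have "safe_track dopen (R t) t y" using g y unfolding SignalOpen_guard_def SafeToOpen_def by blast
    then have Ey: "TrackStatus (R t) y = Empty" using y dop unfolding safe_track_def by auto
    obtain e where e: "e > 0" "e \<le> t" "\<forall>u w. t - e < u \<and> u < t \<and> t - e < w \<and> w < t \<longrightarrow> rho T R u = rho T R w"
      "\<forall>u. t - e < u \<and> u < t \<longrightarrow> (\<forall>y\<in>T. Deadline (R u) y \<noteq> Fin u)"
      using good_left[OF fin run imm t0] by blast
    define u0 where "u0 = t - e/2"
    have u0: "t - e < u0" "u0 < t" "0 \<le> u0" using e unfolding u0_def by auto
    have l0: "0 \<le> t - e" using e by simp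
    have const: "rho T R u = rho T R u0" if "u0 \<le> u" "u < t" for u
      using e(3)[rule_format, of u u0] that u0 by linarith
    have lv: "left_val (rho T R) t (rho T R u0)"
      unfolding left_val_def
    proof (intro exI[of _ e] conjI allI impI)
      show "0 < e" by (rule e(1))
      fix w assume "t - e < w \<and> w < t"
      then show "rho T R w = rho T R u0" using e(3)[rule_format, of w u0] u0 by linarith
    qed
    have "Deadline (rho T R u0) = Deadline (rho T R t)" using run_left[OF fin run imm t0 lv] by simp
    then have Du0: "Deadline (R u0) y = Fin t" using y by (metis rho_simps(3))
    show False
    proof (cases "TrackStatus (R u0) y = Empty")
      case True
      have nc: "\<not> changes (upds T dopen W Controller (R u0) u0) (R u0)"
        using quiet[OF fin run imm l0 e(3) u0(1) u0(2)] e(4) u0 by blast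
      then show False using changes_empty[OF y(1) True] Du0 by auto
    next
      case False
      have ne: "\<forall>u. u0 \<le> u \<and> u < t \<longrightarrow> TrackStatus (R u) y \<noteq> Empty"
      proof (intro allI impI)
        fix u assume "u0 \<le> u \<and> u < t"
        then have "rho T R u = rho T R u0" using const by blast
        then have "TrackStatus (R u) y = TrackStatus (R u0) y" using y(1) by (metis rho_simps(2))
        then show "TrackStatus (R u) y \<noteq> Empty" using False by simp
      qed
      have tmy: "train_motion dmin dmax (\<lambda>u. TrackStatus (R u) y)" using tm y by blast
      obtain d where "d < t" "Deadline (R t) y = Fin d"
        using becomes_empty[OF fin run imm y(1) tmy W dop u0(3) u0(2) Ey ne] by blast
      then show False using y by simp
    qed
  qed
  have "consistent (upds T dopen W Controller (R t) t)"
    by (rule ctrl_consistent) (use nohit in blast)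
  moreover have "changes (upds T dopen W Controller (R t) t) (R t)" using changes_guard[OF g] by blast
  ultimately have "enabled T dopen W Controller (R t) t" unfolding enabled_def by (rule conjI)
  then show ?thesis using imm t0 unfolding immediate_def by auto
qed

end

theorem mainTheorem8:
  fixes T :: "'tr set" and dclose dopen dmin dmax :: real and R :: "real \<Rightarrow> 'tr st" and t :: real
  assumes "finite T"
    and "0 < dclose" and "0 < dopen" and "0 < dmin" and "0 < dmax"
    and "dclose < dmin" and "dmin \<le> dmax"
    and "regular_run T dclose dopen dmin dmax R"
    and "0 < t"
  shows "(SignalOpen_guard T dopen (R t) t \<longleftrightarrow>
            becomes (\<lambda>u. SafeToOpen T dopen (R u) u) True t)
       \<and> (SignalOpen_guard T dopen (R t) t \<longleftrightarrow> SignalOpen_fires T dopen (dmin - dclose) R t)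
       \<and> (SignalOpen_fires T dopen (dmin - dclose) R t \<longrightarrow>
            (\<exists>x\<in>T. becomes (\<lambda>u. TrackStatus (R u) x) Empty t))"
proof -
  define W where "W = dmin - dclose"
  have fin: "finite T" and dop: "0 < dopen" and t0: "0 < t" using assms by auto
  have W: "0 < W" "W < dmin" using assms unfolding W_def by auto
  have rr: "is_run T dopen W R" "immediate T dopen W R Controller"
    "\<forall>x\<in>T. train_motion dmin dmax (\<lambda>u. TrackStatus (R u) x)"
    using assms(8) unfolding regular_run_def W_def Let_def by blast+
  note run = rr(1) and imm = rr(2) and tm = rr(3)
  have tmx: "train_motion dmin dmax (\<lambda>u. TrackStatus (R u) x)" if "x \<in> T" for x
    using tm that by blast
  have G1: "\<exists>x\<in>T. \<exists>u0. 0 \<le> u0 \<and> u0 < t \<and> TrackStatus (R t) x = Empty \<and> TrackStatus (R u0) x \<noteq> Empty \<and>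
     (\<forall>u. u0 \<le> u \<and> u < t \<longrightarrow> TrackStatus (R u) x = TrackStatus (R u0) x)"
    if g: "SignalOpen_guard T dopen (R t) t"
  proof -
    obtain e where e: "e > 0" "\<forall>u. t - e < u \<and> u < t \<longrightarrow> \<not> SafeToOpen T dopen (R u) u"
      using guard_left[OF fin run imm t0 g] by blast
    have "SafeToOpen T dopen (R t) t" using g unfolding SignalOpen_guard_def by simp
    then show ?thesis using safe_becomes[OF fin run imm t0 _ e(1) e(2) dop] by blast
  qed
  have P1: "SignalOpen_guard T dopen (R t) t \<longleftrightarrow> becomes (\<lambda>u. SafeToOpen T dopen (R u) u) True t"
  proof
    assume g: "SignalOpen_guard T dopen (R t) t"
    obtain e where e: "e > 0" "\<forall>u. t - e < u \<and> u < t \<longrightarrow> \<not> SafeToOpen T dopen (R u) u"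
      using guard_left[OF fin run imm t0 g] by blast
    have "left_val (\<lambda>u. SafeToOpen T dopen (R u) u) t False"
      unfolding left_val_def using e by blast
    moreover have "SafeToOpen T dopen (R t) t" using g unfolding SignalOpen_guard_def by simp
    ultimately show "becomes (\<lambda>u. SafeToOpen T dopen (R u) u) True t"
      unfolding becomes_def by blast
  next
    assume b: "becomes (\<lambda>u. SafeToOpen T dopen (R u) u) True t"
    then consider (A) "\<exists>v. left_val (\<lambda>u. SafeToOpen T dopen (R u) u) t v \<and> v \<noteq> True" "SafeToOpen T dopen (R t) t"
      | (B) "\<not> SafeToOpen T dopen (R t) t" "right_val (\<lambda>u. SafeToOpen T dopen (R u) u) t True"
      unfolding becomes_def by auto
    then show "SignalOpen_guard T dopen (R t) t"
    proof cases
      case A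
      then have "left_val (\<lambda>u. SafeToOpen T dopen (R u) u) t False" by auto
      then obtain e where e: "e > 0" "\<forall>u. t - e < u \<and> u < t \<longrightarrow> \<not> SafeToOpen T dopen (R u) u"
        unfolding left_val_def by auto
      obtain x u0 where x: "x \<in> T" "0 \<le> u0" "u0 < t" "TrackStatus (R t) x = Empty" "TrackStatus (R u0) x \<noteq> Empty"
        "\<forall>u. u0 \<le> u \<and> u < t \<longrightarrow> TrackStatus (R u) x = TrackStatus (R u0) x"
        using safe_becomes[OF fin run imm t0 A(2) e(1) e(2) dop] by blast
      have ne: "\<forall>u. u0 \<le> u \<and> u < t \<longrightarrow> TrackStatus (R u) x \<noteq> Empty"
      proof (intro allI impI)
        fix u assume "u0 \<le> u \<and> u < t"
        then have "TrackStatus (R u) x = TrackStatus (R u0) x" using x(6) by blast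
        then show "TrackStatus (R u) x \<noteq> Empty" using x(5) by simp
      qed
      have "Dir (R t) = Close"
        using becomes_empty[OF fin run imm x(1) tmx[OF x(1)] W dop x(2) x(3) x(4) ne] by blast
      then show ?thesis using A(2) unfolding SignalOpen_guard_def by simp
    next
      case B
      then obtain e where e: "e > 0" "\<forall>u. t < u \<and> u < t + e \<longrightarrow> SafeToOpen T dopen (R u) u"
        unfolding right_val_def by auto
      have "0 \<le> t" using t0 by simp
      then show ?thesis using caseB[OF fin run imm _ B(1) e(1) e(2) dop] by blast
    qed
  qed
  have P2: "SignalOpen_guard T dopen (R t) t \<longleftrightarrow> SignalOpen_fires T dopen W R t"
  proof
    assume g: "SignalOpen_guard T dopen (R t) t"
    have "fires T dopen W R Controller t" using guard_fires[OF fin run imm t0 g tm W dop] .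
    then show "SignalOpen_fires T dopen W R t" using g unfolding SignalOpen_fires_def by simp
  next
    assume "SignalOpen_fires T dopen W R t"
    then show "SignalOpen_guard T dopen (R t) t" unfolding SignalOpen_fires_def by simp
  qed
  have P3: "SignalOpen_fires T dopen W R t \<longrightarrow> (\<exists>x\<in>T. becomes (\<lambda>u. TrackStatus (R u) x) Empty t)"
  proof
    assume "SignalOpen_fires T dopen W R t"
    then have g: "SignalOpen_guard T dopen (R t) t" unfolding SignalOpen_fires_def by simp
    obtain x u0 where x: "x \<in> T" "0 \<le> u0" "u0 < t" "TrackStatus (R t) x = Empty" "TrackStatus (R u0) x \<noteq> Empty"
        "\<forall>u. u0 \<le> u \<and> u < t \<longrightarrow> TrackStatus (R u) x = TrackStatus (R u0) x"
      using G1[OF g] by blast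
    have "left_val (\<lambda>u. TrackStatus (R u) x) t (TrackStatus (R u0) x)"
      unfolding left_val_def
    proof (intro exI[of _ "t - u0"] conjI allI impI)
      show "0 < t - u0" using x(3) by simp
      fix u assume "t - (t - u0) < u \<and> u < t"
      then have "u0 \<le> u \<and> u < t" by simp
      then show "TrackStatus (R u) x = TrackStatus (R u0) x" using x(6) by blast
    qed
    then have "(\<exists>v. left_val (\<lambda>u. TrackStatus (R u) x) t v \<and> v \<noteq> Empty) \<and> TrackStatus (R t) x = Empty"
      using x(5) x(4) by (intro conjI exI[of _ "TrackStatus (R u0) x"]) simp_all
    then have "becomes (\<lambda>u. TrackStatus (R u) x) Empty t" unfolding becomes_def by (rule disjI1)
    then show "\<exists>x\<in>T. becomes (\<lambda>u. TrackStatus (R u) x) Empty t" using x(1) by blast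
  qed
  have P2': "SignalOpen_guard T dopen (R t) t \<longleftrightarrow> SignalOpen_fires T dopen (dmin - dclose) R t"
    using P2 unfolding W_def .
  have P3': "SignalOpen_fires T dopen (dmin - dclose) R t \<longrightarrow> (\<exists>x\<in>T. becomes (\<lambda>u. TrackStatus (R u) x) Empty t)"
    using P3 unfolding W_def .
  show ?thesis using P1 P2' P3' by (intro conjI)
qed

end
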